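(* Let $\{X,F\}$ be a compatible pair of skew invertible operators $X,F\in\mathrm{End}(V\otimes V)$, with $F$ invertible. Then $$C_{X,1}\Psi_{F,12}=F_{21}^{-1}C_{X,2},\quad \Psi_{F,12}C_{X,1}=C_{X,2}F_{21}^{-1},\quad \Psi_{F,12}D_{X,2}=D_{X,1}F_{21}^{-1},\quad D_{X,2}\Psi_{F,12}=F_{21}^{-1}D_{X,1}.$$
   Context: $V$ is a complex vector space of dimension $N$ with a fixed basis. For $X\in\mathrm{End}(V\otimes V)$ and $m<r$, $X_{mr}$ denotes the operator on $V^{\otimes n}$ acting as $X$ on tensor factors $m,r$ and as the identity elsewhere, $X_{rm}:=P_{mr}X_{mr}P_{mr}$, $X_m:=X_{m,m+1}$; for $Y\in\mathrm{End}(V)$, $Y_m$ acts as $Y$ on factor $m$. $P$ is the flip $u\otimes v\mapsto v\otimes u$; $\mathrm{Tr}_{(i)}$ is partial trace over factor $i$. $X$ is skew invertible if there is $\Psi_X\in\mathrm{End}(V\otimes V)$ with $\mathrm{Tr}_{(2)}X_{12}\Psi_{X,23}=\mathrm{Tr}_{(2)}\Psi_{X,12}X_{23}=P_{13}$; then $C_X:=\mathrm{Tr}_{(1)}\Psi_{X,12}$, $D_X:=\mathrm{Tr}_{(2)}\Psi_{X,12}$. A pair $\{X,F\}$ is compatible if $X_1F_2F_1=F_2F_1X_2$ and $X_2F_1F_2=F_1F_2X_1$. *)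

theory Defs
  imports "HOL-Analysis.Analysis"
begin

text \<open>V = complex vector space with basis indexed by the finite type 'n (N = CARD('n)).
  Operators are complex matrices w.r.t. the product basis:
  End(V) = op1, End(V\<otimes>V) = op2, End(V\<otimes>V\<otimes>V) = op3.
  Entry A $ p $ q is the coefficient of basis vector p in A applied to basis vector q.\<close>

type_synonym 'n op1 = "complex ^ 'n ^ 'n"
type_synonym 'n op2 = "complex ^ ('n \<times> 'n) ^ ('n \<times> 'n)"
type_synonym 'n op3 = "complex ^ ('n \<times> 'n \<times> 'n) ^ ('n \<times> 'n \<times> 'n)"

definition kdelta :: "'a \<Rightarrow> 'a \<Rightarrow> complex" where
  "kdelta a b = (if a = b then 1 else 0)"

definition flip :: "('n::finite) op2" where
  "flip = (\<chi> p q. kdelta (fst p) (snd q) * kdelta (snd p) (fst q))"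

definition on1 :: "('n::finite) op1 \<Rightarrow> 'n op2" where
  "on1 Y = (\<chi> p q. Y $ fst p $ fst q * kdelta (snd p) (snd q))"
definition on2 :: "('n::finite) op1 \<Rightarrow> 'n op2" where
  "on2 Y = (\<chi> p q. kdelta (fst p) (fst q) * Y $ snd p $ snd q)"

definition on12 :: "('n::finite) op2 \<Rightarrow> 'n op3" where
  "on12 X = (\<chi> p q. X $ (fst p, fst (snd p)) $ (fst q, fst (snd q)) * kdelta (snd (snd p)) (snd (snd q)))"
definition on23 :: "('n::finite) op2 \<Rightarrow> 'n op3" where
  "on23 X = (\<chi> p q. kdelta (fst p) (fst q) * X $ snd p $ snd q)"

definition op21 :: "('n::finite) op2 \<Rightarrow> 'n op2" where
  "op21 X = flip ** X ** flip"

definition ptr_mid :: "('n::finite) op3 \<Rightarrow> 'n op2" where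
  "ptr_mid A = (\<chi> p q. \<Sum>j\<in>UNIV. A $ (fst p, j, snd p) $ (fst q, j, snd q))"

definition ptr1 :: "('n::finite) op2 \<Rightarrow> 'n op1" where
  "ptr1 A = (\<chi> i k. \<Sum>j\<in>UNIV. A $ (j, i) $ (j, k))"
definition ptr2 :: "('n::finite) op2 \<Rightarrow> 'n op1" where
  "ptr2 A = (\<chi> i k. \<Sum>j\<in>UNIV. A $ (i, j) $ (k, j))"

definition is_skew_inverse :: "('n::finite) op2 \<Rightarrow> 'n op2 \<Rightarrow> bool" where
  "is_skew_inverse X Psi \<longleftrightarrow>
     ptr_mid (on12 X ** on23 Psi) = flip \<and> ptr_mid (on12 Psi ** on23 X) = flip"

definition skew_invertible :: "('n::finite) op2 \<Rightarrow> bool" where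
  "skew_invertible X \<longleftrightarrow> (\<exists>Psi. is_skew_inverse X Psi)"

definition skew_inv :: "('n::finite) op2 \<Rightarrow> 'n op2" ("\<Psi>") where
  "skew_inv X = (THE Psi. is_skew_inverse X Psi)"

definition C_op :: "('n::finite) op2 \<Rightarrow> 'n op1" where
  "C_op X = ptr1 (skew_inv X)"
definition D_op :: "('n::finite) op2 \<Rightarrow> 'n op1" where
  "D_op X = ptr2 (skew_inv X)"

definition compatible :: "('n::finite) op2 \<Rightarrow> 'n op2 \<Rightarrow> bool" where
  "compatible X F \<longleftrightarrow>
     on12 X ** on23 F ** on12 F = on23 F ** on12 F ** on23 X \<and>
     on23 X ** on12 F ** on23 F = on12 F ** on23 F ** on12 X"

end

theory Submission
  imports Defs
begin

lemma kd_mult1: "kdelta x a * (h::complex) = (if x = a then h else 0)" by (simp add: kdelta_def)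
lemma kd_mult2: "(h::complex) * kdelta x a = (if x = a then h else 0)" by (simp add: kdelta_def)

lemma sd1[simp]: "(\<Sum>x\<in>UNIV. kdelta x a * (h (x::_::finite)::complex)) = h a"
  by (simp add: kd_mult1)
lemma sd2[simp]: "(\<Sum>x\<in>UNIV. kdelta a x * (h (x::_::finite)::complex)) = h a"
  by (simp add: kd_mult1 eq_commute[of a])
lemma sd3[simp]: "(\<Sum>x\<in>UNIV. (h (x::_::finite)::complex) * kdelta x a) = h a"
  by (simp add: kd_mult2)
lemma sd4[simp]: "(\<Sum>x\<in>UNIV. (h (x::_::finite)::complex) * kdelta a x) = h a"
  by (simp add: kd_mult2 eq_commute[of a])

lemma mv2: "(\<Sum>a\<in>A. \<Sum>b\<in>B. \<Sum>c\<in>C. h a b c) = (\<Sum>b\<in>B. \<Sum>c\<in>C. \<Sum>a\<in>A. h a b c)"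
proof -
  have e: "\<And>b. (\<Sum>a\<in>A. \<Sum>c\<in>C. h a b c) = (\<Sum>c\<in>C. \<Sum>a\<in>A. h a b c)" by (rule sum.swap)
  have "(\<Sum>a\<in>A. \<Sum>b\<in>B. \<Sum>c\<in>C. h a b c) = (\<Sum>b\<in>B. \<Sum>a\<in>A. \<Sum>c\<in>C. h a b c)" by (rule sum.swap)
  also have "\<dots> = (\<Sum>b\<in>B. \<Sum>c\<in>C. \<Sum>a\<in>A. h a b c)" by (simp only: e)
  finally show ?thesis .
qed

lemma mv3: "(\<Sum>a\<in>A. \<Sum>b\<in>B. \<Sum>c\<in>C. \<Sum>d\<in>D. h a b c d) = (\<Sum>b\<in>B. \<Sum>c\<in>C. \<Sum>d\<in>D. \<Sum>a\<in>A. h a b c d)"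
proof -
  have e: "\<And>b. (\<Sum>a\<in>A. \<Sum>c\<in>C. \<Sum>d\<in>D. h a b c d) = (\<Sum>c\<in>C. \<Sum>d\<in>D. \<Sum>a\<in>A. h a b c d)" by (rule mv2)
  have "(\<Sum>a\<in>A. \<Sum>b\<in>B. \<Sum>c\<in>C. \<Sum>d\<in>D. h a b c d) = (\<Sum>b\<in>B. \<Sum>a\<in>A. \<Sum>c\<in>C. \<Sum>d\<in>D. h a b c d)" by (rule sum.swap)
  also have "\<dots> = (\<Sum>b\<in>B. \<Sum>c\<in>C. \<Sum>d\<in>D. \<Sum>a\<in>A. h a b c d)" by (simp only: e)
  finally show ?thesis .
qed

lemma mv4: "(\<Sum>a\<in>A. \<Sum>b\<in>B. \<Sum>c\<in>C. \<Sum>d\<in>D. \<Sum>e\<in>E. h a b c d e) = (\<Sum>b\<in>B. \<Sum>c\<in>C. \<Sum>d\<in>D. \<Sum>e\<in>E. \<Sum>a\<in>A. h a b c d e)"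
proof -
  have e: "\<And>b. (\<Sum>a\<in>A. \<Sum>c\<in>C. \<Sum>d\<in>D. \<Sum>e\<in>E. h a b c d e) = (\<Sum>c\<in>C. \<Sum>d\<in>D. \<Sum>e\<in>E. \<Sum>a\<in>A. h a b c d e)" by (rule mv3)
  have "(\<Sum>a\<in>A. \<Sum>b\<in>B. \<Sum>c\<in>C. \<Sum>d\<in>D. \<Sum>e\<in>E. h a b c d e) = (\<Sum>b\<in>B. \<Sum>a\<in>A. \<Sum>c\<in>C. \<Sum>d\<in>D. \<Sum>e\<in>E. h a b c d e)" by (rule sum.swap)
  also have "\<dots> = (\<Sum>b\<in>B. \<Sum>c\<in>C. \<Sum>d\<in>D. \<Sum>e\<in>E. \<Sum>a\<in>A. h a b c d e)" by (simp only: e)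
  finally show ?thesis .
qed

lemma mv5: "(\<Sum>a\<in>A. \<Sum>b\<in>B. \<Sum>c\<in>C. \<Sum>d\<in>D. \<Sum>e\<in>E. \<Sum>f\<in>F. h a b c d e f) = (\<Sum>b\<in>B. \<Sum>c\<in>C. \<Sum>d\<in>D. \<Sum>e\<in>E. \<Sum>f\<in>F. \<Sum>a\<in>A. h a b c d e f)"
proof -
  have e: "\<And>b. (\<Sum>a\<in>A. \<Sum>c\<in>C. \<Sum>d\<in>D. \<Sum>e\<in>E. \<Sum>f\<in>F. h a b c d e f) = (\<Sum>c\<in>C. \<Sum>d\<in>D. \<Sum>e\<in>E. \<Sum>f\<in>F. \<Sum>a\<in>A. h a b c d e f)" by (rule mv4)
  have "(\<Sum>a\<in>A. \<Sum>b\<in>B. \<Sum>c\<in>C. \<Sum>d\<in>D. \<Sum>e\<in>E. \<Sum>f\<in>F. h a b c d e f) = (\<Sum>b\<in>B. \<Sum>a\<in>A. \<Sum>c\<in>C. \<Sum>d\<in>D. \<Sum>e\<in>E. \<Sum>f\<in>F. h a b c d e f)" by (rule sum.swap)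
  also have "\<dots> = (\<Sum>b\<in>B. \<Sum>c\<in>C. \<Sum>d\<in>D. \<Sum>e\<in>E. \<Sum>f\<in>F. \<Sum>a\<in>A. h a b c d e f)" by (simp only: e)
  finally show ?thesis .
qed

lemma permC: "(\<Sum>y\<in>A. \<Sum>p\<in>B. \<Sum>q\<in>C. \<Sum>j\<in>D. \<Sum>e\<in>E. h y p q j e) = (\<Sum>j\<in>D. \<Sum>e\<in>E. \<Sum>y\<in>A. \<Sum>q\<in>C. \<Sum>p\<in>B. h y p q j e)"
proof -
  have e1: "\<And>y p. (\<Sum>q\<in>C. \<Sum>j\<in>D. \<Sum>e\<in>E. h y p q j e) = (\<Sum>j\<in>D. \<Sum>e\<in>E. \<Sum>q\<in>C. h y p q j e)" by (rule mv2)
  have e2: "\<And>y. (\<Sum>p\<in>B. \<Sum>j\<in>D. \<Sum>e\<in>E. \<Sum>q\<in>C. h y p q j e) = (\<Sum>j\<in>D. \<Sum>e\<in>E. \<Sum>p\<in>B. \<Sum>q\<in>C. h y p q j e)" by (rule mv2)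
  have e4: "\<And>j e y. (\<Sum>p\<in>B. \<Sum>q\<in>C. h y p q j e) = (\<Sum>q\<in>C. \<Sum>p\<in>B. h y p q j e)" by (rule sum.swap)
  have "(\<Sum>y\<in>A. \<Sum>p\<in>B. \<Sum>q\<in>C. \<Sum>j\<in>D. \<Sum>e\<in>E. h y p q j e) = (\<Sum>y\<in>A. \<Sum>p\<in>B. \<Sum>j\<in>D. \<Sum>e\<in>E. \<Sum>q\<in>C. h y p q j e)" by (simp only: e1)
  also have "\<dots> = (\<Sum>y\<in>A. \<Sum>j\<in>D. \<Sum>e\<in>E. \<Sum>p\<in>B. \<Sum>q\<in>C. h y p q j e)" by (simp only: e2)
  also have "\<dots> = (\<Sum>j\<in>D. \<Sum>e\<in>E. \<Sum>y\<in>A. \<Sum>p\<in>B. \<Sum>q\<in>C. h y p q j e)" by (rule mv2)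
  also have "\<dots> = (\<Sum>j\<in>D. \<Sum>e\<in>E. \<Sum>y\<in>A. \<Sum>q\<in>C. \<Sum>p\<in>B. h y p q j e)" by (simp only: e4)
  finally show ?thesis .
qed

lemma permE: "(\<Sum>a\<in>A. \<Sum>x\<in>X. \<Sum>j\<in>B. \<Sum>e\<in>C. \<Sum>w\<in>D. \<Sum>v\<in>E. \<Sum>u\<in>F. h a x j e w v u) = (\<Sum>j\<in>B. \<Sum>e\<in>C. \<Sum>w\<in>D. \<Sum>v\<in>E. \<Sum>u\<in>F. \<Sum>a\<in>A. \<Sum>x\<in>X. h a x j e w v u)"
proof -
  have e1: "\<And>a. (\<Sum>x\<in>X. \<Sum>j\<in>B. \<Sum>e\<in>C. \<Sum>w\<in>D. \<Sum>v\<in>E. \<Sum>u\<in>F. h a x j e w v u) = (\<Sum>j\<in>B. \<Sum>e\<in>C. \<Sum>w\<in>D. \<Sum>v\<in>E. \<Sum>u\<in>F. \<Sum>x\<in>X. h a x j e w v u)" by (rule mv5)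
  have "(\<Sum>a\<in>A. \<Sum>x\<in>X. \<Sum>j\<in>B. \<Sum>e\<in>C. \<Sum>w\<in>D. \<Sum>v\<in>E. \<Sum>u\<in>F. h a x j e w v u) = (\<Sum>a\<in>A. \<Sum>j\<in>B. \<Sum>e\<in>C. \<Sum>w\<in>D. \<Sum>v\<in>E. \<Sum>u\<in>F. \<Sum>x\<in>X. h a x j e w v u)" by (simp only: e1)
  also have "\<dots> = (\<Sum>j\<in>B. \<Sum>e\<in>C. \<Sum>w\<in>D. \<Sum>v\<in>E. \<Sum>u\<in>F. \<Sum>a\<in>A. \<Sum>x\<in>X. h a x j e w v u)" by (rule mv5)
  finally show ?thesis .
qed

lemma perm23: "(\<Sum>b\<in>B. \<Sum>f\<in>F. \<Sum>a\<in>A. \<Sum>x\<in>X. \<Sum>y\<in>Y. h b f a x y) = (\<Sum>a\<in>A. \<Sum>x\<in>X. \<Sum>y\<in>Y. \<Sum>b\<in>B. \<Sum>f\<in>F. h b f a x y)"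
proof -
  have e1: "\<And>b. (\<Sum>f\<in>F. \<Sum>a\<in>A. \<Sum>x\<in>X. \<Sum>y\<in>Y. h b f a x y) = (\<Sum>a\<in>A. \<Sum>x\<in>X. \<Sum>y\<in>Y. \<Sum>f\<in>F. h b f a x y)" by (rule mv3)
  have "(\<Sum>b\<in>B. \<Sum>f\<in>F. \<Sum>a\<in>A. \<Sum>x\<in>X. \<Sum>y\<in>Y. h b f a x y) = (\<Sum>b\<in>B. \<Sum>a\<in>A. \<Sum>x\<in>X. \<Sum>y\<in>Y. \<Sum>f\<in>F. h b f a x y)" by (simp only: e1)
  also have "\<dots> = (\<Sum>a\<in>A. \<Sum>x\<in>X. \<Sum>y\<in>Y. \<Sum>b\<in>B. \<Sum>f\<in>F. h b f a x y)" by (rule mv3)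
  finally show ?thesis .
qed

definition Cmf :: "('n::finite \<Rightarrow> 'n \<Rightarrow> 'n \<Rightarrow> 'n \<Rightarrow> complex) \<Rightarrow> 'n \<Rightarrow> 'n \<Rightarrow> complex" where
  "Cmf p a b = (\<Sum>j\<in>UNIV. p j a j b)"

lemma abstract_goal:
  fixes xx f g p q :: "'n::finite \<Rightarrow> 'n \<Rightarrow> 'n \<Rightarrow> 'n \<Rightarrow> complex"
  assumes H1: "\<And>a c g' i. (\<Sum>j\<in>UNIV. \<Sum>e\<in>UNIV. xx a j g' e * p e c j i) = kdelta a i * kdelta c g'"
    and H2: "\<And>a c g' i. (\<Sum>j\<in>UNIV. \<Sum>e\<in>UNIV. p a j g' e * xx e c j i) = kdelta a i * kdelta c g'"
    and HK: "\<And>x1 b j a e e'. (\<Sum>y\<in>UNIV. \<Sum>q'\<in>UNIV. (\<Sum>p'\<in>UNIV. f x1 b y p' * xx p' j q' e') * g y q' a e)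
               = (\<Sum>w\<in>UNIV. \<Sum>v\<in>UNIV. (\<Sum>u\<in>UNIV. g b j u v * xx x1 u a w) * f w v e e')"
    and HGF: "\<And>b j e e'. (\<Sum>u\<in>UNIV. \<Sum>v\<in>UNIV. g b j u v * f u v e e') = kdelta b e * kdelta j e'"
    and HS1F: "\<And>a c g' i. (\<Sum>j\<in>UNIV. \<Sum>e\<in>UNIV. f a j g' e * q e c j i) = kdelta a i * kdelta c g'"
  shows "(\<Sum>a'\<in>UNIV. g k c a' e * Cmf p a' l) = (\<Sum>f'\<in>UNIV. Cmf p c f' * q f' k e l)"
proof -
  define Cm where "Cm = Cmf p"
  have Tr1: "(\<Sum>a\<in>UNIV. \<Sum>x'\<in>UNIV. Cm a x' * xx x' u a w) = kdelta u w" for u w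
  proof -
    have "(\<Sum>a\<in>UNIV. \<Sum>x'\<in>UNIV. Cm a x' * xx x' u a w)
        = (\<Sum>a\<in>UNIV. \<Sum>x'\<in>UNIV. \<Sum>j\<in>UNIV. p j a j x' * xx x' u a w)"
      by (simp add: Cm_def Cmf_def sum_distrib_right)
    also have "\<dots> = (\<Sum>j\<in>UNIV. \<Sum>a\<in>UNIV. \<Sum>x'\<in>UNIV. p j a j x' * xx x' u a w)"
      by (rule mv2[symmetric])
    also have "\<dots> = (\<Sum>j\<in>UNIV. kdelta j w * kdelta u j)" by (simp only: H2)
    also have "\<dots> = kdelta u w" by simp
    finally show ?thesis .
  qed
  have Core: "(\<Sum>a\<in>UNIV. \<Sum>x'\<in>UNIV. \<Sum>y\<in>UNIV. Cm a x' * f x' b y f' * g y c a e) = kdelta b e * Cm c f'" for b c e f'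
  proof -
    have pc: "\<And>a x'. (\<Sum>y\<in>UNIV. \<Sum>p'\<in>UNIV. \<Sum>q'\<in>UNIV. \<Sum>j\<in>UNIV. \<Sum>e'\<in>UNIV. Cm a x' * f x' b y p' * g y q' a e
          * (xx p' j q' e' * p e' c j f')) = (\<Sum>j\<in>UNIV. \<Sum>e'\<in>UNIV. \<Sum>y\<in>UNIV. \<Sum>q'\<in>UNIV. \<Sum>p'\<in>UNIV. Cm a x' * f x' b y p' * g y q' a e
          * (xx p' j q' e' * p e' c j f'))" by (rule permC)
    have "(\<Sum>a\<in>UNIV. \<Sum>x'\<in>UNIV. \<Sum>y\<in>UNIV. Cm a x' * f x' b y f' * g y c a e)
      = (\<Sum>a\<in>UNIV. \<Sum>x'\<in>UNIV. \<Sum>y\<in>UNIV. \<Sum>p'\<in>UNIV. \<Sum>q'\<in>UNIV. Cm a x' * f x' b y p' * g y q' a e * (kdelta p' f' * kdelta c q'))"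
      by (simp add: mult.assoc[symmetric])
    also have "\<dots> = (\<Sum>a\<in>UNIV. \<Sum>x'\<in>UNIV. \<Sum>y\<in>UNIV. \<Sum>p'\<in>UNIV. \<Sum>q'\<in>UNIV. Cm a x' * f x' b y p' * g y q' a e
          * (\<Sum>j\<in>UNIV. \<Sum>e'\<in>UNIV. xx p' j q' e' * p e' c j f'))"
      by (simp only: H1)
    also have "\<dots> = (\<Sum>a\<in>UNIV. \<Sum>x'\<in>UNIV. \<Sum>y\<in>UNIV. \<Sum>p'\<in>UNIV. \<Sum>q'\<in>UNIV. \<Sum>j\<in>UNIV. \<Sum>e'\<in>UNIV. Cm a x' * f x' b y p' * g y q' a e
          * (xx p' j q' e' * p e' c j f'))"
      by (simp only: sum_distrib_left)
    also have "\<dots> = (\<Sum>a\<in>UNIV. \<Sum>x'\<in>UNIV. \<Sum>j\<in>UNIV. \<Sum>e'\<in>UNIV. \<Sum>y\<in>UNIV. \<Sum>q'\<in>UNIV. \<Sum>p'\<in>UNIV. Cm a x' * f x' b y p' * g y q' a e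
          * (xx p' j q' e' * p e' c j f'))"
      by (simp only: pc)
    also have "\<dots> = (\<Sum>a\<in>UNIV. \<Sum>x'\<in>UNIV. \<Sum>j\<in>UNIV. \<Sum>e'\<in>UNIV. Cm a x' * (\<Sum>y\<in>UNIV. \<Sum>q'\<in>UNIV. (\<Sum>p'\<in>UNIV. f x' b y p' * xx p' j q' e') * g y q' a e) * p e' c j f')"
      by (simp only: sum_distrib_left sum_distrib_right, (intro sum.cong refl)?, (simp add: mult_ac)?)
    also have "\<dots> = (\<Sum>a\<in>UNIV. \<Sum>x'\<in>UNIV. \<Sum>j\<in>UNIV. \<Sum>e'\<in>UNIV. Cm a x' * (\<Sum>w\<in>UNIV. \<Sum>v\<in>UNIV. (\<Sum>u\<in>UNIV. g b j u v * xx x' u a w) * f w v e e') * p e' c j f')"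
      by (simp only: HK)
    also have "\<dots> = (\<Sum>a\<in>UNIV. \<Sum>x'\<in>UNIV. \<Sum>j\<in>UNIV. \<Sum>e'\<in>UNIV. \<Sum>w\<in>UNIV. \<Sum>v\<in>UNIV. \<Sum>u\<in>UNIV. g b j u v * f w v e e' * p e' c j f' * (Cm a x' * xx x' u a w))"
      by (simp only: sum_distrib_left sum_distrib_right, (intro sum.cong refl)?, (simp add: mult_ac)?)
    also have "\<dots> = (\<Sum>j\<in>UNIV. \<Sum>e'\<in>UNIV. \<Sum>w\<in>UNIV. \<Sum>v\<in>UNIV. \<Sum>u\<in>UNIV. \<Sum>a\<in>UNIV. \<Sum>x'\<in>UNIV. g b j u v * f w v e e' * p e' c j f' * (Cm a x' * xx x' u a w))"
      by (rule permE)
    also have "\<dots> = (\<Sum>j\<in>UNIV. \<Sum>e'\<in>UNIV. \<Sum>w\<in>UNIV. \<Sum>v\<in>UNIV. \<Sum>u\<in>UNIV. g b j u v * f w v e e' * p e' c j f' * (\<Sum>a\<in>UNIV. \<Sum>x'\<in>UNIV. Cm a x' * xx x' u a w))"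
      by (simp only: sum_distrib_left)
    also have "\<dots> = (\<Sum>j\<in>UNIV. \<Sum>e'\<in>UNIV. \<Sum>w\<in>UNIV. \<Sum>v\<in>UNIV. \<Sum>u\<in>UNIV. g b j u v * f w v e e' * p e' c j f' * kdelta u w)"
      by (simp only: Tr1)
    also have "\<dots> = (\<Sum>j\<in>UNIV. \<Sum>e'\<in>UNIV. \<Sum>w\<in>UNIV. \<Sum>v\<in>UNIV. g b j w v * f w v e e' * p e' c j f')"
      by (simp only: sd3)
    also have "\<dots> = (\<Sum>j\<in>UNIV. \<Sum>e'\<in>UNIV. (\<Sum>w\<in>UNIV. \<Sum>v\<in>UNIV. g b j w v * f w v e e') * p e' c j f')"
      by (simp only: sum_distrib_right)
    also have "\<dots> = (\<Sum>j\<in>UNIV. \<Sum>e'\<in>UNIV. kdelta b e * kdelta j e' * p e' c j f')"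
      by (simp only: HGF)
    also have "\<dots> = (\<Sum>j\<in>UNIV. kdelta b e * p j c j f')"
      by (simp add: mult.assoc sum_distrib_left[symmetric])
    also have "\<dots> = kdelta b e * Cm c f'"
      by (simp add: Cm_def Cmf_def sum_distrib_left)
    finally show ?thesis .
  qed
  have "(\<Sum>f'\<in>UNIV. Cm c f' * q f' k e l) = (\<Sum>b\<in>UNIV. \<Sum>f'\<in>UNIV. kdelta b e * Cm c f' * q f' k b l)"
    by (subst sum.swap, simp add: mult.assoc)
  also have "\<dots> = (\<Sum>b\<in>UNIV. \<Sum>f'\<in>UNIV. (\<Sum>a\<in>UNIV. \<Sum>x'\<in>UNIV. \<Sum>y\<in>UNIV. Cm a x' * f x' b y f' * g y c a e) * q f' k b l)"
    by (simp only: Core)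
  also have "\<dots> = (\<Sum>b\<in>UNIV. \<Sum>f'\<in>UNIV. \<Sum>a\<in>UNIV. \<Sum>x'\<in>UNIV. \<Sum>y\<in>UNIV. Cm a x' * g y c a e * (f x' b y f' * q f' k b l))"
    by (simp only: sum_distrib_left sum_distrib_right, (intro sum.cong refl)?, (simp add: mult_ac)?)
  also have "\<dots> = (\<Sum>a\<in>UNIV. \<Sum>x'\<in>UNIV. \<Sum>y\<in>UNIV. \<Sum>b\<in>UNIV. \<Sum>f'\<in>UNIV. Cm a x' * g y c a e * (f x' b y f' * q f' k b l))"
    by (rule perm23)
  also have "\<dots> = (\<Sum>a\<in>UNIV. \<Sum>x'\<in>UNIV. \<Sum>y\<in>UNIV. Cm a x' * g y c a e * (\<Sum>b\<in>UNIV. \<Sum>f'\<in>UNIV. f x' b y f' * q f' k b l))"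
    by (simp only: sum_distrib_left)
  also have "\<dots> = (\<Sum>a\<in>UNIV. \<Sum>x'\<in>UNIV. \<Sum>y\<in>UNIV. Cm a x' * g y c a e * (kdelta x' l * kdelta k y))"
    by (simp only: HS1F)
  also have "\<dots> = (\<Sum>a\<in>UNIV. Cm a l * g k c a e)"
    by (simp add: mult.assoc[symmetric])
  also have "\<dots> = (\<Sum>a'\<in>UNIV. g k c a' e * Cm a' l)"
    by (rule sum.cong, simp_all add: mult.commute)
  finally show ?thesis by (simp add: Cm_def)
qed

lemma sum_pair: "(\<Sum>k\<in>(UNIV::('a::finite \<times> 'b::finite) set). h k) = (\<Sum>a\<in>UNIV. \<Sum>b\<in>UNIV. h (a,b))"
proof -
  have "(\<Sum>a\<in>UNIV. \<Sum>b\<in>UNIV. h (a,b)) = (\<Sum>(a,b)\<in>UNIV \<times> UNIV. h (a,b))" by (rule sum.cartesian_product)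
  then show ?thesis by (simp add: UNIV_Times_UNIV)
qed

lemma r1: "((x::complex) * kdelta c k3) * (kdelta k1 d * y) = kdelta k1 d * (kdelta c k3 * (x * y))"
  by (simp add: mult_ac)
lemma r2: "(kdelta a k1 * (x::complex)) * (y * kdelta k3 f) = kdelta a k1 * (kdelta k3 f * (x * y))"
  by (simp add: mult_ac)
lemma r3: "(m::complex) * (y * kdelta k3 f) = kdelta k3 f * (m * y)"
  by (simp add: mult_ac)
lemma r4: "(m::complex) * (kdelta k1 a * y) = kdelta k1 a * (m * y)"
  by (simp add: mult_ac)

lemma e12_23: "(on12 A ** on23 B) $ (a,b,c) $ (d,e,f) = (\<Sum>r\<in>UNIV. A$(a,b)$(d,r) * B$(r,c)$(e,f))"
  unfolding matrix_matrix_mult_def on12_def on23_def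
  by (simp add: sum_pair r1 sum_distrib_left[symmetric] del: sum_distrib_left)

lemma e23_12: "(on23 A ** on12 B) $ (a,b,c) $ (d,e,f) = (\<Sum>r\<in>UNIV. A$(b,c)$(r,f) * B$(a,r)$(d,e))"
  unfolding matrix_matrix_mult_def on12_def on23_def
  by (simp add: sum_pair r2 sum_distrib_left[symmetric] del: sum_distrib_left)

lemma eM_12: "(M ** on12 B) $ i $ (a,e,f) = (\<Sum>s1\<in>UNIV. \<Sum>s2\<in>UNIV. M$i$(s1,s2,f) * B$(s1,s2)$(a,e))"
  unfolding matrix_matrix_mult_def on12_def
  by (simp add: sum_pair r3 sum_distrib_left[symmetric] del: sum_distrib_left)

lemma eM_23: "(M ** on23 B) $ i $ (a,e,f) = (\<Sum>s1\<in>UNIV. \<Sum>s2\<in>UNIV. M$i$(a,s1,s2) * B$(s1,s2)$(e,f))"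
  unfolding matrix_matrix_mult_def on23_def
  by (simp add: sum_pair r4 sum_distrib_left[symmetric] del: sum_distrib_left)

lemma ptr_mid_e: "ptr_mid M $ (a,c) $ (g,i) = (\<Sum>j\<in>UNIV. M $ (a,j,c) $ (g,j,i))"
  by (simp add: ptr_mid_def)

lemma flip_e: "flip $ (a,c) $ (g,i) = kdelta a i * kdelta c g"
  by (simp add: flip_def)

abbreviation ix :: "('n::finite) op2 \<Rightarrow> 'n \<Rightarrow> 'n \<Rightarrow> 'n \<Rightarrow> 'n \<Rightarrow> complex" where
  "ix Y a b c d \<equiv> Y $ (a,b) $ (c,d)"

lemma kdelta_sym: "kdelta a b = kdelta b a" by (simp add: kdelta_def)

lemma mat1_e: "(mat 1 :: ('n::finite) op2) $ (a,b) $ (c,d) = kdelta a c * kdelta b d"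
  by (simp add: mat_def kdelta_def)

lemma mat1_3e: "(mat 1 :: ('n::finite) op3) $ (a,b,c) $ (d,e,f) = kdelta a d * (kdelta b e * kdelta c f)"
  by (simp add: mat_def kdelta_def)

lemma mult2_e: "((A::('n::finite) op2) ** B) $ (a,b) $ (c,d) = (\<Sum>u\<in>UNIV. \<Sum>v\<in>UNIV. ix A a b u v * ix B u v c d)"
  unfolding matrix_matrix_mult_def by (simp add: sum_pair)

lemma r5: "(x * kdelta c k3) * (y * kdelta k3 f) = kdelta c k3 * (kdelta k3 f * ((x::complex) * y))"
  by (simp add: mult_ac)
lemma r6: "(kdelta a k1 * x) * (kdelta k1 d * y) = kdelta a k1 * (kdelta k1 d * ((x::complex) * y))"
  by (simp add: mult_ac)

lemma on12_mult: "on12 A ** on12 B = on12 (A ** B)"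
proof -
  have "(on12 A ** on12 B) $ (a,b,c) $ (d,e,f) = on12 (A ** B) $ (a,b,c) $ (d,e,f)" for a b c d e f
    unfolding matrix_matrix_mult_def on12_def
    by (simp add: sum_pair r5 sum_distrib_left[symmetric] sum_distrib_right[symmetric] del: sum_distrib_left sum_distrib_right)
  then show ?thesis by (simp add: vec_eq_iff)
qed

lemma on23_mult: "on23 A ** on23 B = on23 (A ** B)"
proof -
  have "(on23 A ** on23 B) $ (a,b,c) $ (d,e,f) = on23 (A ** B) $ (a,b,c) $ (d,e,f)" for a b c d e f
    unfolding matrix_matrix_mult_def on23_def
    by (simp add: sum_pair r6 sum_distrib_left[symmetric] del: sum_distrib_left)
  then show ?thesis by (simp add: vec_eq_iff)
qed

lemma on12_one: "on12 (mat 1) = (mat 1 :: ('n::finite) op3)"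
  by (simp add: vec_eq_iff on12_def mat_def kdelta_def)

lemma on23_one: "on23 (mat 1) = (mat 1 :: ('n::finite) op3)"
  by (simp add: vec_eq_iff on23_def mat_def kdelta_def)

lemma q1: "((x::complex) * kdelta b v) * y = kdelta b v * (x * y)" by (simp add: mult_ac)
lemma q2: "(kdelta a u * (x::complex)) * y = kdelta a u * (x * y)" by (simp add: mult_ac)
lemma q3: "(y::complex) * (x * kdelta v d) = kdelta v d * (y * x)" by (simp add: mult_ac)
lemma q4: "(y::complex) * (kdelta u c * x) = kdelta u c * (y * x)" by (simp add: mult_ac)
lemma q5: "(kdelta a v * kdelta b u) * (y::complex) = kdelta b u * (kdelta a v * y)" by (simp add: mult_ac)
lemma q6: "(y::complex) * (kdelta u d * kdelta v c) = kdelta u d * (kdelta v c * y)" by (simp add: mult_ac)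

lemma on1_l: "(on1 C ** Y) $ (a,b) $ (c,d) = (\<Sum>r\<in>UNIV. C $ a $ r * ix Y r b c d)"
  unfolding mult2_e by (simp add: on1_def q1 del: sum_distrib_left)

lemma on2_l: "(on2 C ** Y) $ (a,b) $ (c,d) = (\<Sum>r\<in>UNIV. C $ b $ r * ix Y a r c d)"
  unfolding mult2_e by (simp add: on2_def q2 sum_distrib_left[symmetric] del: sum_distrib_left)

lemma on1_r: "(Y ** on1 C) $ (a,b) $ (c,d) = (\<Sum>r\<in>UNIV. ix Y a b r d * C $ r $ c)"
  unfolding mult2_e by (simp add: on1_def q3 del: sum_distrib_left)

lemma on2_r: "(Y ** on2 C) $ (a,b) $ (c,d) = (\<Sum>r\<in>UNIV. ix Y a b c r * C $ r $ d)"
  unfolding mult2_e by (simp add: on2_def q4 sum_distrib_left[symmetric] del: sum_distrib_left)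

lemma flip_l: "(flip ** Y) $ (a,b) $ (c,d) = ix Y b a c d"
  unfolding mult2_e by (simp add: flip_def q5 sum_distrib_left[symmetric] del: sum_distrib_left)

lemma flip_r: "(Y ** flip) $ (a,b) $ (c,d) = ix Y a b d c"
  unfolding mult2_e by (simp add: flip_def q6 sum_distrib_left[symmetric] del: sum_distrib_left)

lemma op21_e: "op21 Y $ (a,b) $ (c,d) = ix Y b a d c"
  unfolding op21_def by (simp add: flip_r flip_l)

lemma skew_entry: "is_skew_inverse X P \<longleftrightarrow>
   (\<forall>a c g i. (\<Sum>j\<in>UNIV. \<Sum>e\<in>UNIV. ix X a j g e * ix P e c j i) = kdelta a i * kdelta c g) \<and>
   (\<forall>a c g i. (\<Sum>j\<in>UNIV. \<Sum>e\<in>UNIV. ix P a j g e * ix X e c j i) = kdelta a i * kdelta c g)"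
  unfolding is_skew_inverse_def vec_eq_iff
  by (simp add: split_paired_All ptr_mid_e e12_23 flip_e)

lemma perm22: "(\<Sum>a\<in>A. \<Sum>b\<in>B. \<Sum>c\<in>C. \<Sum>d\<in>D. h a b c d) = (\<Sum>c\<in>C. \<Sum>d\<in>D. \<Sum>a\<in>A. \<Sum>b\<in>B. h a b c d)"
proof -
  have e: "\<And>a. (\<Sum>b\<in>B. \<Sum>c\<in>C. \<Sum>d\<in>D. h a b c d) = (\<Sum>c\<in>C. \<Sum>d\<in>D. \<Sum>b\<in>B. h a b c d)" by (rule mv2)
  have "(\<Sum>a\<in>A. \<Sum>b\<in>B. \<Sum>c\<in>C. \<Sum>d\<in>D. h a b c d) = (\<Sum>a\<in>A. \<Sum>c\<in>C. \<Sum>d\<in>D. \<Sum>b\<in>B. h a b c d)" by (simp only: e)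
  also have "\<dots> = (\<Sum>c\<in>C. \<Sum>d\<in>D. \<Sum>a\<in>A. \<Sum>b\<in>B. h a b c d)" by (rule mv2)
  finally show ?thesis .
qed

lemma skew_unique:
  assumes "is_skew_inverse X P1" "is_skew_inverse X P2"
  shows "P1 = P2"
proof -
  have S2: "\<And>a c g i. (\<Sum>j\<in>UNIV. \<Sum>e\<in>UNIV. ix P1 a j g e * ix X e c j i) = kdelta a i * kdelta c g"
    using assms(1) unfolding skew_entry by blast
  have S1: "\<And>a c g i. (\<Sum>j\<in>UNIV. \<Sum>e\<in>UNIV. ix X a j g e * ix P2 e c j i) = kdelta a i * kdelta c g"
    using assms(2) unfolding skew_entry by blast
  have "ix P1 a c g i = ix P2 a c g i" for a c g i
  proof -
    have "ix P1 a c g i = (\<Sum>j\<in>UNIV. \<Sum>e\<in>UNIV. ix P1 a j g e * (kdelta e i * kdelta c j))"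
      by (simp add: mult.assoc[symmetric] sum_distrib_right[symmetric] del: sum_distrib_right)
    also have "\<dots> = (\<Sum>j\<in>UNIV. \<Sum>e\<in>UNIV. ix P1 a j g e * (\<Sum>j'\<in>UNIV. \<Sum>e'\<in>UNIV. ix X e j' j e' * ix P2 e' c j' i))"
      by (simp only: S1)
    also have "\<dots> = (\<Sum>j\<in>UNIV. \<Sum>e\<in>UNIV. \<Sum>j'\<in>UNIV. \<Sum>e'\<in>UNIV. ix P1 a j g e * ix X e j' j e' * ix P2 e' c j' i)"
      by (simp only: sum_distrib_left mult.assoc)
    also have "\<dots> = (\<Sum>j'\<in>UNIV. \<Sum>e'\<in>UNIV. \<Sum>j\<in>UNIV. \<Sum>e\<in>UNIV. ix P1 a j g e * ix X e j' j e' * ix P2 e' c j' i)"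
      by (rule perm22)
    also have "\<dots> = (\<Sum>j'\<in>UNIV. \<Sum>e'\<in>UNIV. (\<Sum>j\<in>UNIV. \<Sum>e\<in>UNIV. ix P1 a j g e * ix X e j' j e') * ix P2 e' c j' i)"
      by (simp only: sum_distrib_right)
    also have "\<dots> = (\<Sum>j'\<in>UNIV. \<Sum>e'\<in>UNIV. (kdelta a e' * kdelta j' g) * ix P2 e' c j' i)"
      by (simp only: S2)
    also have "\<dots> = ix P2 a c g i"
      by (simp add: mult.assoc sum_distrib_left[symmetric] del: sum_distrib_left)
    finally show ?thesis .
  qed
  then show ?thesis by (simp add: vec_eq_iff split_paired_All)
qed

lemma skew_inv_prop: "skew_invertible X \<Longrightarrow> is_skew_inverse X (skew_inv X)"
  unfolding skew_invertible_def skew_inv_def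
  by (rule theI', metis skew_unique)

lemma inv_prop:
  fixes F :: "('n::finite) op2"
  assumes "invertible F"
  shows "F ** matrix_inv F = mat 1" "matrix_inv F ** F = mat 1"
proof -
  have "\<exists>A'. F ** A' = mat 1 \<and> A' ** F = mat 1" using assms unfolding invertible_def .
  then have "F ** matrix_inv F = mat 1 \<and> matrix_inv F ** F = mat 1"
    unfolding matrix_inv_def by (rule someI_ex)
  then show "F ** matrix_inv F = mat 1" "matrix_inv F ** F = mat 1" by auto
qed

lemma inv_unique:
  fixes A B :: "('n::finite) op2"
  assumes "A ** B = mat 1" "B ** A = mat 1"
  shows "matrix_inv A = B"
proof -
  have inv: "invertible A" unfolding invertible_def using assms by blast
  have "matrix_inv A = matrix_inv A ** (A ** B)" by (simp add: assms)
  also have "\<dots> = (matrix_inv A ** A) ** B" by (simp add: matrix_mul_assoc)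
  also have "\<dots> = B" by (simp add: inv_prop(2)[OF inv])
  finally show ?thesis .
qed

lemma flipflip: "flip ** flip = (mat 1 :: ('n::finite) op2)"
  by (simp add: vec_eq_iff split_paired_All flip_l flip_e mat1_e kdelta_sym mult.commute)

lemma op21_inv:
  fixes F :: "('n::finite) op2"
  assumes "invertible F"
  shows "matrix_inv (op21 F) = op21 (matrix_inv F)"
proof (rule inv_unique)
  show "op21 F ** op21 (matrix_inv F) = mat 1"
    unfolding op21_def
    by (metis (no_types, lifting) flipflip inv_prop(1)[OF assms] matrix_mul_assoc matrix_mul_lid)
  show "op21 (matrix_inv F) ** op21 F = mat 1"
    unfolding op21_def
    by (metis (no_types, lifting) flipflip inv_prop(2)[OF assms] matrix_mul_assoc matrix_mul_lid)
qed

lemma K1: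
  fixes X F :: "('n::finite) op2"
  assumes "compatible X F" "invertible F"
  shows "on12 F ** on23 X ** on12 (matrix_inv F) = on23 (matrix_inv F) ** on12 X ** on23 F"
proof -
  let ?G = "matrix_inv F"
  have A: "on12 X ** on23 F ** on12 F = on23 F ** on12 F ** on23 X" using assms(1) unfolding compatible_def by blast
  have i12: "on12 F ** on12 ?G = mat 1" by (simp add: on12_mult inv_prop[OF assms(2)] on12_one)
  have i23: "on23 ?G ** on23 F = mat 1" by (simp add: on23_mult inv_prop[OF assms(2)] on23_one)
  have "on23 ?G ** on12 X ** on23 F = on23 ?G ** (on12 X ** on23 F ** on12 F) ** on12 ?G"
    by (metis i12 matrix_mul_assoc matrix_mul_rid)
  also have "\<dots> = on23 ?G ** (on23 F ** on12 F ** on23 X) ** on12 ?G" by (simp only: A)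
  also have "\<dots> = on12 F ** on23 X ** on12 ?G"
    using i23 by (simp add: matrix_mul_assoc)
  finally show ?thesis by simp
qed

lemma K2:
  fixes X F :: "('n::finite) op2"
  assumes "compatible X F" "invertible F"
  shows "on12 (matrix_inv F) ** on23 X ** on12 F = on23 F ** on12 X ** on23 (matrix_inv F)"
proof -
  let ?G = "matrix_inv F"
  have B: "on23 X ** on12 F ** on23 F = on12 F ** on23 F ** on12 X" using assms(1) unfolding compatible_def by blast
  have i12: "on12 ?G ** on12 F = mat 1" by (simp add: on12_mult inv_prop[OF assms(2)] on12_one)
  have i23: "on23 F ** on23 ?G = mat 1" by (simp add: on23_mult inv_prop[OF assms(2)] on23_one)
  have "on12 ?G ** on23 X ** on12 F = on12 ?G ** (on23 X ** on12 F ** on23 F) ** on23 ?G"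
    by (metis i23 matrix_mul_assoc matrix_mul_rid)
  also have "\<dots> = on12 ?G ** (on12 F ** on23 F ** on12 X) ** on23 ?G" by (simp only: B)
  also have "\<dots> = on23 F ** on12 X ** on23 ?G"
    using i12 by (simp add: matrix_mul_assoc)
  finally show ?thesis .
qed

lemma P132: "(\<Sum>a\<in>A. \<Sum>b\<in>B. \<Sum>c\<in>C. h a b c) = (\<Sum>a\<in>A. \<Sum>c\<in>C. \<Sum>b\<in>B. h a b c)"
proof -
  have e: "\<And>a. (\<Sum>b\<in>B. \<Sum>c\<in>C. h a b c) = (\<Sum>c\<in>C. \<Sum>b\<in>B. h a b c)" by (rule sum.swap)
  show ?thesis by (simp only: e)
qed
lemma P312: "(\<Sum>a\<in>A. \<Sum>b\<in>B. \<Sum>c\<in>C. h a b c) = (\<Sum>c\<in>C. \<Sum>a\<in>A. \<Sum>b\<in>B. h a b c)"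
  by (rule mv2[symmetric])
lemma P321: "(\<Sum>a\<in>A. \<Sum>b\<in>B. \<Sum>c\<in>C. h a b c) = (\<Sum>c\<in>C. \<Sum>b\<in>B. \<Sum>a\<in>A. h a b c)"
proof -
  have e: "\<And>c. (\<Sum>a\<in>A. \<Sum>b\<in>B. h a b c) = (\<Sum>b\<in>B. \<Sum>a\<in>A. h a b c)" by (rule sum.swap)
  have "(\<Sum>a\<in>A. \<Sum>b\<in>B. \<Sum>c\<in>C. h a b c) = (\<Sum>c\<in>C. \<Sum>a\<in>A. \<Sum>b\<in>B. h a b c)" by (rule P312)
  also have "\<dots> = (\<Sum>c\<in>C. \<Sum>b\<in>B. \<Sum>a\<in>A. h a b c)" by (simp only: e)
  finally show ?thesis .
qed

lemma e3a: "(on12 A ** on23 B ** on12 C) $ (x1,b,j) $ (a,e,e') = (\<Sum>s1\<in>UNIV. \<Sum>s2\<in>UNIV. (\<Sum>r\<in>UNIV. ix A x1 b s1 r * ix B r j s2 e') * ix C s1 s2 a e)"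
  by (unfold eM_12, unfold e12_23, rule refl)
lemma e3b: "(on23 A ** on12 B ** on23 C) $ (x1,b,j) $ (a,e,e') = (\<Sum>s1\<in>UNIV. \<Sum>s2\<in>UNIV. (\<Sum>r\<in>UNIV. ix A b j r s2 * ix B x1 r a s1) * ix C s1 s2 e e')"
  by (unfold eM_23, unfold e23_12, rule refl)

lemma Cop_e: "C_op X $ i $ k = Cmf (ix (skew_inv X)) i k"
  by (simp add: C_op_def ptr1_def Cmf_def)
lemma Dop_e: "D_op X $ i $ k = (\<Sum>j\<in>UNIV. ix (skew_inv X) i j k j)"
  by (simp add: D_op_def ptr2_def)

lemma main_all:
  fixes X F :: "('n::finite) op2"
  assumes cmp: "compatible X F"
    and sX: "skew_invertible X" and sF: "skew_invertible F"
    and iF: "invertible F"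
  shows "on1 (C_op X) ** skew_inv F = matrix_inv (op21 F) ** on2 (C_op X)
       \<and> skew_inv F ** on1 (C_op X) = on2 (C_op X) ** matrix_inv (op21 F)
       \<and> skew_inv F ** on2 (D_op X) = on1 (D_op X) ** matrix_inv (op21 F)
       \<and> on2 (D_op X) ** skew_inv F = matrix_inv (op21 F) ** on1 (D_op X)"
proof -
  define PX where "PX = skew_inv X"
  define PF where "PF = skew_inv F"
  define G where "G = matrix_inv F"
  have SX: "is_skew_inverse X PX" unfolding PX_def by (rule skew_inv_prop[OF sX])
  have SF: "is_skew_inverse F PF" unfolding PF_def by (rule skew_inv_prop[OF sF])
  have S1X: "\<And>a c g i. (\<Sum>j\<in>UNIV. \<Sum>e\<in>UNIV. ix X a j g e * ix PX e c j i) = kdelta a i * kdelta c g"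
    using SX unfolding skew_entry by blast
  have S2X: "\<And>a c g i. (\<Sum>j\<in>UNIV. \<Sum>e\<in>UNIV. ix PX a j g e * ix X e c j i) = kdelta a i * kdelta c g"
    using SX unfolding skew_entry by blast
  have S1F: "\<And>a c g i. (\<Sum>j\<in>UNIV. \<Sum>e\<in>UNIV. ix F a j g e * ix PF e c j i) = kdelta a i * kdelta c g"
    using SF unfolding skew_entry by blast
  have S2F: "\<And>a c g i. (\<Sum>j\<in>UNIV. \<Sum>e\<in>UNIV. ix PF a j g e * ix F e c j i) = kdelta a i * kdelta c g"
    using SF unfolding skew_entry by blast
  have GF: "\<And>b j e e'. (\<Sum>u\<in>UNIV. \<Sum>v\<in>UNIV. ix G b j u v * ix F u v e e') = kdelta b e * kdelta j e'"
  proof -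
    fix b j e e'
    have "(G ** F) $ (b,j) $ (e,e') = (mat 1 :: ('n::finite) op2) $ (b,j) $ (e,e')"
      unfolding G_def by (simp add: inv_prop(2)[OF iF])
    then show "(\<Sum>u\<in>UNIV. \<Sum>v\<in>UNIV. ix G b j u v * ix F u v e e') = kdelta b e * kdelta j e'"
      by (simp only: mult2_e mat1_e)
  qed
  have FG: "\<And>b j e e'. (\<Sum>u\<in>UNIV. \<Sum>v\<in>UNIV. ix F b j u v * ix G u v e e') = kdelta b e * kdelta j e'"
  proof -
    fix b j e e'
    have "(F ** G) $ (b,j) $ (e,e') = (mat 1 :: ('n::finite) op2) $ (b,j) $ (e,e')"
      unfolding G_def by (simp add: inv_prop(1)[OF iF])
    then show "(\<Sum>u\<in>UNIV. \<Sum>v\<in>UNIV. ix F b j u v * ix G u v e e') = kdelta b e * kdelta j e'"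
      by (simp only: mult2_e mat1_e)
  qed
  have K1e: "\<And>x1 b j a e e'. (\<Sum>s1\<in>UNIV. \<Sum>s2\<in>UNIV. (\<Sum>r\<in>UNIV. ix F x1 b s1 r * ix X r j s2 e') * ix G s1 s2 a e)
      = (\<Sum>s1\<in>UNIV. \<Sum>s2\<in>UNIV. (\<Sum>r\<in>UNIV. ix G b j r s2 * ix X x1 r a s1) * ix F s1 s2 e e')"
  proof -
    fix x1 b j a e e'
    have "(on12 F ** on23 X ** on12 G) $ (x1,b,j) $ (a,e,e') = (on23 G ** on12 X ** on23 F) $ (x1,b,j) $ (a,e,e')"
      using K1[OF cmp iF] unfolding G_def by simp
    then show "?thesis x1 b j a e e'" by (simp only: e3a e3b)
  qed
  have K2e: "\<And>x1 b j a e e'. (\<Sum>s1\<in>UNIV. \<Sum>s2\<in>UNIV. (\<Sum>r\<in>UNIV. ix G x1 b s1 r * ix X r j s2 e') * ix F s1 s2 a e)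
      = (\<Sum>s1\<in>UNIV. \<Sum>s2\<in>UNIV. (\<Sum>r\<in>UNIV. ix F b j r s2 * ix X x1 r a s1) * ix G s1 s2 e e')"
  proof -
    fix x1 b j a e e'
    have "(on12 G ** on23 X ** on12 F) $ (x1,b,j) $ (a,e,e') = (on23 F ** on12 X ** on23 G) $ (x1,b,j) $ (a,e,e')"
      using K2[OF cmp iF] unfolding G_def by simp
    then show "?thesis x1 b j a e e'" by (simp only: e3a e3b)
  qed
  have G21: "matrix_inv (op21 F) = op21 G" unfolding G_def by (rule op21_inv[OF iF])

  have I1: "\<And>k c e l. (\<Sum>a'\<in>UNIV. ix G k c a' e * Cmf (ix PX) a' l) = (\<Sum>f'\<in>UNIV. Cmf (ix PX) c f' * ix PF f' k e l)"
    by (rule abstract_goal[where xx="ix X" and f="ix F" and g="ix G" and p="ix PX" and q="ix PF", OF S1X S2X K1e GF S1F])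
  have goal1: "on1 (C_op X) ** skew_inv F = matrix_inv (op21 F) ** on2 (C_op X)"
    unfolding G21 PF_def[symmetric]
    by (simp add: vec_eq_iff split_paired_All on1_l on2_r op21_e Cop_e PX_def[symmetric] I1)

  (* goal 2: transposed instance *)
  have H1T: "\<And>a c g i. (\<Sum>j\<in>UNIV. \<Sum>e\<in>UNIV. ix X g e a j * ix PX j i e c) = kdelta a i * kdelta c g"
    subgoal for a c g i using S1X[where a="g" and c="i" and g="a" and i="c"] by (subst sum.swap) (simp add: mult.commute kdelta_sym)
    done
  have H2T: "\<And>a c g i. (\<Sum>j\<in>UNIV. \<Sum>e\<in>UNIV. ix PX g e a j * ix X j i e c) = kdelta a i * kdelta c g"
    subgoal for a c g i using S2X[where a="g" and c="i" and g="a" and i="c"] by (subst sum.swap) (simp add: mult.commute kdelta_sym)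
    done
  have HS1FT: "\<And>a c g i. (\<Sum>j\<in>UNIV. \<Sum>e\<in>UNIV. ix F g e a j * ix PF j i e c) = kdelta a i * kdelta c g"
    subgoal for a c g i using S1F[where a="g" and c="i" and g="a" and i="c"] by (subst sum.swap) (simp add: mult.commute kdelta_sym)
    done
  have HGFT: "\<And>b j e e'. (\<Sum>u\<in>UNIV. \<Sum>v\<in>UNIV. ix G u v b j * ix F e e' u v) = kdelta b e * kdelta j e'"
    subgoal for b j e e' using FG[where b="e" and j="e'" and e="b" and e'="j"] by (simp add: mult.commute kdelta_sym)
    done
  have HKT: "\<And>x1 b j a e e'. (\<Sum>y\<in>UNIV. \<Sum>q'\<in>UNIV. (\<Sum>p'\<in>UNIV. ix F y p' x1 b * ix X q' e' p' j) * ix G a e y q')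
      = (\<Sum>w\<in>UNIV. \<Sum>v\<in>UNIV. (\<Sum>u\<in>UNIV. ix G u v b j * ix X a w x1 u) * ix F e e' w v)"
  proof -
    fix x1 b j a e e'
    have "(\<Sum>y\<in>UNIV. \<Sum>q'\<in>UNIV. (\<Sum>p'\<in>UNIV. ix F y p' x1 b * ix X q' e' p' j) * ix G a e y q')
      = (\<Sum>s1\<in>UNIV. \<Sum>s2\<in>UNIV. (\<Sum>r\<in>UNIV. ix G a e s1 r * ix X r e' s2 j) * ix F s1 s2 x1 b)"
      apply (simp only: sum_distrib_right)
      apply (rule trans[OF P132])
      apply (intro sum.cong refl)
      apply ((simp add: mult_ac)+)?
      done
    also have "\<dots> = (\<Sum>s1\<in>UNIV. \<Sum>s2\<in>UNIV. (\<Sum>r\<in>UNIV. ix F e e' r s2 * ix X a r x1 s1) * ix G s1 s2 b j)"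
      by (rule K2e)
    also have "\<dots> = (\<Sum>w\<in>UNIV. \<Sum>v\<in>UNIV. (\<Sum>u\<in>UNIV. ix G u v b j * ix X a w x1 u) * ix F e e' w v)"
      apply (simp only: sum_distrib_right)
      apply (rule trans[OF P321])
      apply (intro sum.cong refl)
      apply ((simp add: mult_ac)+)?
      done
    finally show "?thesis x1 b j a e e'" .
  qed
  have I2: "\<And>k c e l. (\<Sum>a'\<in>UNIV. ix G a' e k c * Cmf (\<lambda>a b c d. ix PX c d a b) a' l) = (\<Sum>f'\<in>UNIV. Cmf (\<lambda>a b c d. ix PX c d a b) c f' * ix PF e l f' k)"
    by (rule abstract_goal[where xx="\<lambda>a b c d. ix X c d a b" and f="\<lambda>a b c d. ix F c d a b" and g="\<lambda>a b c d. ix G c d a b"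
          and p="\<lambda>a b c d. ix PX c d a b" and q="\<lambda>a b c d. ix PF c d a b", OF H1T H2T HKT HGFT HS1FT])
  have I2': "(\<Sum>r\<in>UNIV. ix PF \<alpha> \<beta> r \<delta> * C_op X $ r $ \<gamma>) = (\<Sum>r\<in>UNIV. C_op X $ \<beta> $ r * ix G r \<alpha> \<delta> \<gamma>)" for \<alpha> \<beta> \<gamma> \<delta>
    using I2[where k="\<delta>" and c="\<gamma>" and e="\<alpha>" and l="\<beta>"] by (simp add: Cop_e Cmf_def PX_def mult.commute)
  have goal2: "skew_inv F ** on1 (C_op X) = on2 (C_op X) ** matrix_inv (op21 F)"
    unfolding G21 PF_def[symmetric]
    by (simp add: vec_eq_iff split_paired_All on1_r on2_l op21_e I2')

  (* goal 4: flipped instance *)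
  have H1F4: "\<And>a c g i. (\<Sum>j\<in>UNIV. \<Sum>e\<in>UNIV. ix X j a e g * ix PX c e i j) = kdelta a i * kdelta c g"
    subgoal for a c g i using S2X[where a="c" and c="a" and g="i" and i="g"] by (subst sum.swap) (simp add: mult.commute kdelta_sym)
    done
  have H2F4: "\<And>a c g i. (\<Sum>j\<in>UNIV. \<Sum>e\<in>UNIV. ix PX j a e g * ix X c e i j) = kdelta a i * kdelta c g"
    subgoal for a c g i using S1X[where a="c" and c="a" and g="i" and i="g"] by (subst sum.swap) (simp add: mult.commute kdelta_sym)
    done
  have HS1FF4: "\<And>a c g i. (\<Sum>j\<in>UNIV. \<Sum>e\<in>UNIV. ix F j a e g * ix PF c e i j) = kdelta a i * kdelta c g"
    subgoal for a c g i using S2F[where a="c" and c="a" and g="i" and i="g"] by (subst sum.swap) (simp add: mult.commute kdelta_sym)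
    done
  have HGFF4: "\<And>b j e e'. (\<Sum>u\<in>UNIV. \<Sum>v\<in>UNIV. ix G j b v u * ix F v u e' e) = kdelta b e * kdelta j e'"
    subgoal for b j e e' using GF[where b="j" and j="b" and e="e'" and e'="e"] by (subst sum.swap) (simp add: mult.commute kdelta_sym)
    done
  have HKF4: "\<And>x1 b j a e e'. (\<Sum>y\<in>UNIV. \<Sum>q'\<in>UNIV. (\<Sum>p'\<in>UNIV. ix F b x1 p' y * ix X j p' e' q') * ix G q' y e a)
      = (\<Sum>w\<in>UNIV. \<Sum>v\<in>UNIV. (\<Sum>u\<in>UNIV. ix G j b v u * ix X u x1 w a) * ix F v w e' e)"
  proof -
    fix x1 b j a e e'
    have "(\<Sum>y\<in>UNIV. \<Sum>q'\<in>UNIV. (\<Sum>p'\<in>UNIV. ix F b x1 p' y * ix X j p' e' q') * ix G q' y e a)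
      = (\<Sum>s1\<in>UNIV. \<Sum>s2\<in>UNIV. (\<Sum>r\<in>UNIV. ix F b x1 r s2 * ix X j r e' s1) * ix G s1 s2 e a)"
      apply (simp only: sum_distrib_right)
      apply (rule trans[OF sum.swap])
      apply (intro sum.cong refl)
      apply ((simp add: mult_ac)+)?
      done
    also have "\<dots> = (\<Sum>s1\<in>UNIV. \<Sum>s2\<in>UNIV. (\<Sum>r\<in>UNIV. ix G j b s1 r * ix X r x1 s2 a) * ix F s1 s2 e' e)"
      by (rule K2e[symmetric])
    also have "\<dots> = (\<Sum>w\<in>UNIV. \<Sum>v\<in>UNIV. (\<Sum>u\<in>UNIV. ix G j b v u * ix X u x1 w a) * ix F v w e' e)"
      apply (simp only: sum_distrib_right)
      apply (rule trans[OF sum.swap])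
      apply (intro sum.cong refl)
      apply ((simp add: mult_ac)+)?
      done
    finally show "?thesis x1 b j a e e'" .
  qed
  have I4: "\<And>k c e l. (\<Sum>a'\<in>UNIV. ix G c k e a' * Cmf (\<lambda>a b c d. ix PX b a d c) a' l) = (\<Sum>f'\<in>UNIV. Cmf (\<lambda>a b c d. ix PX b a d c) c f' * ix PF k f' l e)"
    by (rule abstract_goal[where xx="\<lambda>a b c d. ix X b a d c" and f="\<lambda>a b c d. ix F b a d c" and g="\<lambda>a b c d. ix G b a d c"
          and p="\<lambda>a b c d. ix PX b a d c" and q="\<lambda>a b c d. ix PF b a d c", OF H1F4 H2F4 HKF4 HGFF4 HS1FF4])
  have I4': "(\<Sum>r\<in>UNIV. D_op X $ \<beta> $ r * ix PF \<alpha> r \<gamma> \<delta>) = (\<Sum>r\<in>UNIV. ix G \<beta> \<alpha> \<delta> r * D_op X $ r $ \<gamma>)" for \<alpha> \<beta> \<gamma> \<delta>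
    using I4[where k="\<alpha>" and c="\<beta>" and e="\<delta>" and l="\<gamma>"] by (simp add: Dop_e Cmf_def PX_def mult.commute)
  have goal4: "on2 (D_op X) ** skew_inv F = matrix_inv (op21 F) ** on1 (D_op X)"
    unfolding G21 PF_def[symmetric]
    by (simp add: vec_eq_iff split_paired_All on2_l on1_r op21_e I4')

  (* goal 3: transposed flipped instance *)
  have H1F3: "\<And>a c g i. (\<Sum>j\<in>UNIV. \<Sum>e\<in>UNIV. ix X e g j a * ix PX i j c e) = kdelta a i * kdelta c g"
    subgoal for a c g i using S2X[where a="i" and c="g" and g="c" and i="a"] by (simp add: mult.commute kdelta_sym)
    done
  have H2F3: "\<And>a c g i. (\<Sum>j\<in>UNIV. \<Sum>e\<in>UNIV. ix PX e g j a * ix X i j c e) = kdelta a i * kdelta c g"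
    subgoal for a c g i using S1X[where a="i" and c="g" and g="c" and i="a"] by (simp add: mult.commute kdelta_sym)
    done
  have HS1FF3: "\<And>a c g i. (\<Sum>j\<in>UNIV. \<Sum>e\<in>UNIV. ix F e g j a * ix PF i j c e) = kdelta a i * kdelta c g"
    subgoal for a c g i using S2F[where a="i" and c="g" and g="c" and i="a"] by (simp add: mult.commute kdelta_sym)
    done
  have HGFF3: "\<And>b j e e'. (\<Sum>u\<in>UNIV. \<Sum>v\<in>UNIV. ix G v u j b * ix F e' e v u) = kdelta b e * kdelta j e'"
    subgoal for b j e e' using FG[where b="e'" and j="e" and e="j" and e'="b"] by (subst sum.swap) (simp add: mult.commute kdelta_sym)
    done
  have HKF3: "\<And>x1 b j a e e'. (\<Sum>y\<in>UNIV. \<Sum>q'\<in>UNIV. (\<Sum>p'\<in>UNIV. ix F p' y b x1 * ix X e' q' j p') * ix G e a q' y)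
      = (\<Sum>w\<in>UNIV. \<Sum>v\<in>UNIV. (\<Sum>u\<in>UNIV. ix G v u j b * ix X w a u x1) * ix F e' e v w)"
  proof -
    fix x1 b j a e e'
    have "(\<Sum>y\<in>UNIV. \<Sum>q'\<in>UNIV. (\<Sum>p'\<in>UNIV. ix F p' y b x1 * ix X e' q' j p') * ix G e a q' y)
      = (\<Sum>s1\<in>UNIV. \<Sum>s2\<in>UNIV. (\<Sum>r\<in>UNIV. ix G e a r s2 * ix X e' r j s1) * ix F s1 s2 b x1)"
      apply (simp only: sum_distrib_right)
      apply (rule trans[OF P312])
      apply (intro sum.cong refl)
      apply ((simp add: mult_ac)+)?
      done
    also have "\<dots> = (\<Sum>s1\<in>UNIV. \<Sum>s2\<in>UNIV. (\<Sum>r\<in>UNIV. ix F e' e s1 r * ix X r a s2 x1) * ix G s1 s2 j b)"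
      by (rule K1e[symmetric])
    also have "\<dots> = (\<Sum>w\<in>UNIV. \<Sum>v\<in>UNIV. (\<Sum>u\<in>UNIV. ix G v u j b * ix X w a u x1) * ix F e' e v w)"
      apply (simp only: sum_distrib_right)
      apply (rule trans[OF P312])
      apply (intro sum.cong refl)
      apply ((simp add: mult_ac)+)?
      done
    finally show "?thesis x1 b j a e e'" .
  qed
  have I3: "\<And>k c e l. (\<Sum>a'\<in>UNIV. ix G e a' c k * Cmf (\<lambda>a b c d. ix PX d c b a) a' l) = (\<Sum>f'\<in>UNIV. Cmf (\<lambda>a b c d. ix PX d c b a) c f' * ix PF l e k f')"
    by (rule abstract_goal[where xx="\<lambda>a b c d. ix X d c b a" and f="\<lambda>a b c d. ix F d c b a" and g="\<lambda>a b c d. ix G d c b a"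
          and p="\<lambda>a b c d. ix PX d c b a" and q="\<lambda>a b c d. ix PF d c b a", OF H1F3 H2F3 HKF3 HGFF3 HS1FF3])
  have I3': "(\<Sum>r\<in>UNIV. ix PF \<alpha> \<beta> \<gamma> r * D_op X $ r $ \<delta>) = (\<Sum>r\<in>UNIV. D_op X $ \<alpha> $ r * ix G \<beta> r \<delta> \<gamma>)" for \<alpha> \<beta> \<gamma> \<delta>
    using I3[where k="\<gamma>" and c="\<delta>" and e="\<beta>" and l="\<alpha>"] by (simp add: Dop_e Cmf_def PX_def mult.commute)
  have goal3: "skew_inv F ** on2 (D_op X) = on1 (D_op X) ** matrix_inv (op21 F)"
    unfolding G21 PF_def[symmetric]
    by (simp add: vec_eq_iff split_paired_All on2_r on1_l op21_e I3')
  show ?thesis using goal1 goal2 goal3 goal4 by blast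
qed

theorem lemma3p3:
  fixes X F :: "('n::finite) op2"
  assumes "compatible X F"
    and "skew_invertible X" and "skew_invertible F"
    and "invertible F"
  shows "on1 (C_op X) ** skew_inv F = matrix_inv (op21 F) ** on2 (C_op X)
       \<and> skew_inv F ** on1 (C_op X) = on2 (C_op X) ** matrix_inv (op21 F)
       \<and> skew_inv F ** on2 (D_op X) = on1 (D_op X) ** matrix_inv (op21 F)
       \<and> on2 (D_op X) ** skew_inv F = matrix_inv (op21 F) ** on1 (D_op X)"
  by (rule main_all[OF assms])

end
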